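(* Let $m\geq 3$ and $n\in \mathbb{N}$. Then \[ \sigma'_m(n) =\sum_{k=0}^\infty (-1)^{k+1} \big( P_{m+2,k} \cdot p'_m(n-P_{m+2,k})+ Q_{m+2,k} \cdot p'_m(n-Q_{m+2,k})\big), \] where $P_{m+2,k}=\frac{k(mk-(m-2))}{2}$ and $Q_{m+2,k}=\frac{k(mk+(m-2))}{2}$.
   Context: For $m\ge3$ and $n\in\mathbb{N}$, $\sigma'_m(n)$ is the sum of the positive divisors $d$ of $n$ with $d\equiv 0$, $1$ or $m-1 \pmod m$. $p'_m(n)$ is the number of partitions of $n$ in which every part is congruent to $0$, $1$ or $m-1$ modulo $m$, with $p'_m(0)=1$ and $p'_m(x)=0$ for $x\notin\mathbb{N}_0$. *)

theory Defs
  imports "HOL-Analysis.Analysis" "HOL-Library.Multiset"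
begin

definition admissible :: "nat \<Rightarrow> nat \<Rightarrow> bool" where
  "admissible m d \<longleftrightarrow> d mod m = 0 \<or> d mod m = 1 \<or> d mod m = (m - 1) mod m"

definition sigma' :: "nat \<Rightarrow> nat \<Rightarrow> nat" where
  "sigma' m n = (\<Sum>d \<in> {d. d dvd n \<and> 0 < d \<and> admissible m d}. d)"

definition partitions_of :: "nat \<Rightarrow> nat multiset set" where
  "partitions_of n = {M. (\<forall>x \<in># M. 0 < x) \<and> sum_mset M = n}"

definition p' :: "nat \<Rightarrow> int \<Rightarrow> nat" where
  "p' m x = (if x < 0 then 0
             else card {M \<in> partitions_of (nat x). \<forall>a \<in># M. admissible m a})"

definition Pgon :: "nat \<Rightarrow> nat \<Rightarrow> int" where
  "Pgon m k = (int k * (int m * int k - (int m - 2))) div 2"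

definition Qgon :: "nat \<Rightarrow> nat \<Rightarrow> int" where
  "Qgon m k = (int k * (int m * int k + (int m - 2))) div 2"

end

theory Submission
  imports Defs "HOL-Computational_Algebra.Formal_Power_Series"
begin

no_notation vec_nth (infixl \<open>$\<close> 90)
notation fps_nth (infixl \<open>$\<close> 75)


definition Pt :: "nat \<Rightarrow> nat \<Rightarrow> nat multiset set" where
  "Pt m n = {M \<in> partitions_of n. \<forall>a \<in># M. admissible m a}"

lemma p'_nat: "p' m (int n) = card (Pt m n)"
  by (simp add: p'_def Pt_def)

lemma sum_mset_count:
  fixes M :: "nat multiset"
  assumes "finite A" "set_mset M \<subseteq> A"
  shows "sum_mset M = (\<Sum>x\<in>A. count M x * x)"
  using assms(2)
proof (induction M)
  case empty then show ?case by simp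
next
  case (add y M)
  then have yA: "y \<in> A" and MA: "set_mset M \<subseteq> A" by auto
  have "(\<Sum>x\<in>A. count (add_mset y M) x * x) = (\<Sum>x\<in>A. count M x * x + (if x = y then y else 0))"
    by (intro sum.cong) auto
  also have "\<dots> = (\<Sum>x\<in>A. count M x * x) + y"
    using yA assms(1) by (simp add: sum.distrib)
  finally show ?case using add.IH[OF MA] by simp
qed

lemma mem_le_sum_mset: fixes M :: "nat multiset" shows "x \<in># M \<Longrightarrow> x \<le> sum_mset M"
  by (induction M) auto

lemma size_le_sum_mset: fixes M :: "nat multiset"
  shows "(\<forall>x\<in>#M. 0 < x) \<Longrightarrow> size M \<le> sum_mset M"
  by (induction M) auto

lemma count_mul_le: fixes M :: "nat multiset"
  shows "count M d * d \<le> sum_mset M"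
proof (induction M)
  case empty then show ?case by simp
next
  case (add x M) then show ?case by (cases "x = d") auto
qed

lemma Pt_sub: "Pt m n \<subseteq> (\<Union>s\<in>{..n}. multisets_of_size {1..n} s)"
proof
  fix M assume "M \<in> Pt m n"
  then have pos: "\<forall>x\<in>#M. 0 < x" and s: "sum_mset M = n"
    by (auto simp: Pt_def partitions_of_def)
  have "set_mset M \<subseteq> {1..n}" using pos s mem_le_sum_mset[of _ M]
    by (auto simp: Suc_le_eq)
  moreover have "size M \<le> n" using size_le_sum_mset[OF pos] s by simp
  ultimately show "M \<in> (\<Union>s\<in>{..n}. multisets_of_size {1..n} s)"
    by (auto simp: multisets_of_size_def)
qed

lemma finite_Pt: "finite (Pt m n)"
  by (rule finite_subset[OF Pt_sub]) auto

lemma Pt_set: "M \<in> Pt m n \<Longrightarrow> set_mset M \<subseteq> {1..n}"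
  using mem_le_sum_mset[of _ M] by (fastforce simp: Pt_def partitions_of_def Suc_le_eq)

lemma card_count_ge:
  assumes d: "0 < d" and r: "0 < r"
  shows "card {M \<in> Pt m n. r \<le> count M d} =
         (if admissible m d \<and> r * d \<le> n then card (Pt m (n - r * d)) else 0)"
proof (cases "admissible m d \<and> r * d \<le> n")
  case True
  let ?R = "replicate_mset r d"
  have "bij_betw (\<lambda>M. M + ?R) (Pt m (n - r * d)) {M \<in> Pt m n. r \<le> count M d}"
  proof (rule bij_betw_byWitness[where f' = "\<lambda>M. M - ?R"])
    show "\<forall>a\<in>Pt m (n - r * d). a + ?R - ?R = a" by simp
    show "\<forall>a'\<in>{M \<in> Pt m n. r \<le> count M d}. a' - ?R + ?R = a'"
    proof
      fix M assume "M \<in> {M \<in> Pt m n. r \<le> count M d}"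
      then have "?R \<subseteq># M" by (auto simp: subseteq_mset_def)
      then show "M - ?R + ?R = M" by (simp add: subset_mset.diff_add)
    qed
    show "(\<lambda>M. M + ?R) ` Pt m (n - r * d) \<subseteq> {M \<in> Pt m n. r \<le> count M d}"
      using True d by (auto simp: Pt_def partitions_of_def sum_mset_replicate_mset split: if_splits)
    show "(\<lambda>M. M - ?R) ` {M \<in> Pt m n. r \<le> count M d} \<subseteq> Pt m (n - r * d)"
    proof
      fix M' assume "M' \<in> (\<lambda>M. M - ?R) ` {M \<in> Pt m n. r \<le> count M d}"
      then obtain M where M: "M \<in> Pt m n" "r \<le> count M d" and M': "M' = M - ?R" by auto
      have sub: "?R \<subseteq># M" using M by (auto simp: subseteq_mset_def)
      then have "M = M' + ?R" using M' by (simp add: subset_mset.diff_add)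
      then have "sum_mset M = sum_mset M' + r * d" by simp
      then have "sum_mset M' = n - r * d" using M by (auto simp: Pt_def partitions_of_def)
      moreover have "\<forall>x\<in>#M'. 0 < x \<and> admissible m x" using M M'
        by (auto simp: Pt_def partitions_of_def dest: in_diffD)
      ultimately show "M' \<in> Pt m (n - r * d)" by (auto simp: Pt_def partitions_of_def)
    qed
  qed
  then show ?thesis using True by (simp add: bij_betw_same_card)
next
  case False
  have "{M \<in> Pt m n. r \<le> count M d} = {}"
  proof (rule ccontr)
    assume "{M \<in> Pt m n. r \<le> count M d} \<noteq> {}"
    then obtain M where M: "M \<in> Pt m n" "r \<le> count M d" by auto
    then have "d \<in># M" using r by (simp add: count_greater_zero_iff[symmetric] del: count_greater_zero_iff)
    then have ad: "admissible m d" using M by (auto simp: Pt_def)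
    have "count M d * d \<le> n" using count_mul_le[of M d] M(1) by (simp add: Pt_def partitions_of_def)
    moreover have "r * d \<le> count M d * d" using M(2) by (rule mult_le_mono1)
    ultimately have "r * d \<le> n" by (rule order_trans[rotated])
    then show False using False ad by blast
  qed
  then show ?thesis using False by (simp only: card.empty if_False)
qed

lemma count_le_n: "M \<in> Pt m n \<Longrightarrow> 0 < d \<Longrightarrow> count M d \<le> n"
proof -
  assume M: "M \<in> Pt m n" and d: "0 < d"
  have "count M d * d \<le> n" using count_mul_le[of M d] M by (simp add: Pt_def partitions_of_def)
  moreover have "count M d \<le> count M d * d" using d by simp
  ultimately show ?thesis by (rule order_trans[rotated])
qed

lemma card_le_r: "c \<le> n \<Longrightarrow> card {r \<in> {1..n}. r \<le> (c::nat)} = c"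
proof -
  assume "c \<le> n"
  then have "{r \<in> {1..n}. r \<le> c} = {1..c}" by auto
  then show ?thesis by simp
qed

lemma sigma'_alt: "sigma' m j = (\<Sum>d \<in> {d \<in> {1..j}. d dvd j \<and> admissible m d}. d)" if "0 < j"
proof -
  have "{d. d dvd j \<and> 0 < d \<and> admissible m d} = {d \<in> {1..j}. d dvd j \<and> admissible m d}"
    using that by (auto dest: dvd_imp_le)
  then show ?thesis by (simp add: sigma'_def)
qed

lemma sum_if_const: "finite A \<Longrightarrow> (\<Sum>x\<in>A. if P x then (d::nat) else 0) = d * card {x\<in>A. P x}"
  by (simp add: sum.inter_filter[symmetric])

lemma rec_nat: "n * card (Pt m n) = (\<Sum>j=1..n. sigma' m j * card (Pt m (n - j)))"
proof -
  let ?c = "\<lambda>k. card (Pt m k)"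
  have "(\<Sum>M\<in>Pt m n. sum_mset M) = (\<Sum>M\<in>Pt m n. n)"
    by (rule sum.cong) (auto simp: Pt_def partitions_of_def)
  then have "n * ?c n = (\<Sum>M\<in>Pt m n. sum_mset M)"
    by (simp only: sum_constant mult.commute of_nat_id)
  also have "\<dots> = (\<Sum>M\<in>Pt m n. \<Sum>d\<in>{1..n}. count M d * d)"
    by (intro sum.cong refl sum_mset_count) (simp_all add: Pt_set[simplified])
  also have "\<dots> = (\<Sum>d\<in>{1..n}. \<Sum>M\<in>Pt m n. count M d * d)"
    by (rule sum.swap)
  also have "\<dots> = (\<Sum>d\<in>{1..n}. \<Sum>M\<in>Pt m n. \<Sum>r\<in>{1..n}. if r \<le> count M d then d else 0)"
  proof (intro sum.cong refl)
    fix d M assume "d \<in> {1..n}" "M \<in> Pt m n"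
    then have "count M d \<le> n" by (intro count_le_n) auto
    then have "card {r \<in> {1..n}. r \<le> count M d} = count M d" by (rule card_le_r)
    then show "count M d * d = (\<Sum>r\<in>{1..n}. if r \<le> count M d then d else 0)"
      by (simp only: sum_if_const[OF finite_atLeastAtMost] mult.commute)
  qed
  also have "\<dots> = (\<Sum>d\<in>{1..n}. \<Sum>r\<in>{1..n}. d * card {M \<in> Pt m n. r \<le> count M d})"
  proof (intro sum.cong refl)
    fix d assume "d \<in> {1..n}"
    have "(\<Sum>M\<in>Pt m n. \<Sum>r\<in>{1..n}. if r \<le> count M d then d else 0)
        = (\<Sum>r\<in>{1..n}. \<Sum>M\<in>Pt m n. if r \<le> count M d then d else 0)"
      by (rule sum.swap)
    also have "\<dots> = (\<Sum>r\<in>{1..n}. d * card {M \<in> Pt m n. r \<le> count M d})"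
      using finite_Pt[of m n] by (simp add: sum_if_const)
    finally show "(\<Sum>M\<in>Pt m n. \<Sum>r\<in>{1..n}. if r \<le> count M d then d else 0)
        = (\<Sum>r\<in>{1..n}. d * card {M \<in> Pt m n. r \<le> count M d})" .
  qed
  also have "\<dots> = (\<Sum>d\<in>{1..n}. \<Sum>r\<in>{1..n}. if admissible m d \<and> r * d \<le> n then d * ?c (n - r * d) else 0)"
    by (intro sum.cong refl) (simp add: card_count_ge)
  also have "\<dots> = (\<Sum>p\<in>{1..n} \<times> {1..n}. if admissible m (fst p) \<and> snd p * fst p \<le> n then fst p * ?c (n - snd p * fst p) else 0)"
    by (simp add: sum.cartesian_product case_prod_beta)
  also have "\<dots> = (\<Sum>p\<in>{p \<in> {1..n} \<times> {1..n}. admissible m (fst p) \<and> snd p * fst p \<le> n}. fst p * ?c (n - snd p * fst p))"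
    by (simp add: sum.inter_filter)
  also have "\<dots> = (\<Sum>p\<in>(SIGMA j:{1..n}. {d \<in> {1..j}. d dvd j \<and> admissible m d}). snd p * ?c (n - fst p))"
    apply (rule sum.reindex_bij_witness[where i = "\<lambda>p. (snd p, fst p div snd p)" and j = "\<lambda>p. (snd p * fst p, fst p)"])
    subgoal by auto
    subgoal for p
    proof -
      assume "p \<in> {p \<in> {1..n} \<times> {1..n}. admissible m (fst p) \<and> snd p * fst p \<le> n}"
      then obtain d r where p: "p = (d, r)" and d: "1 \<le> d" "d \<le> n" and r: "1 \<le> r" "r \<le> n"
        and ad: "admissible m d" and le: "r * d \<le> n" by auto
      have "d \<le> r * d" using r by simp
      then show ?thesis using p d r ad le by simp
    qed
    subgoal for p
    proof -
      assume "p \<in> (SIGMA j:{1..n}. {d \<in> {1..j}. d dvd j \<and> admissible m d})"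
      then obtain j d where p: "p = (j, d)" and dv: "d dvd j" by auto
      then show ?thesis by simp
    qed
    subgoal for p
    proof -
      assume "p \<in> (SIGMA j:{1..n}. {d \<in> {1..j}. d dvd j \<and> admissible m d})"
      then obtain j d where p: "p = (j, d)" and j: "1 \<le> j" "j \<le> n" and d: "1 \<le> d" "d \<le> j"
        and dv: "d dvd j" and ad: "admissible m d" by auto
      from dv obtain t where t: "j = d * t" by (auto elim: dvdE)
      have dpos: "0 < d" using d by simp
      have dn: "d \<le> n" using d j by simp
      have jd: "j div d = t" using t dpos by simp
      have "1 \<le> t" using t j by (cases t) auto
      moreover have "t \<le> n" using t j d by (metis dvd_imp_le dvd_triv_right le_trans neq0_conv not_one_le_zero)
      ultimately show ?thesis using p jd t j d ad dn by (simp add: mult.commute)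
    qed
    subgoal by auto
    done
  also have "\<dots> = (\<Sum>j\<in>{1..n}. \<Sum>d\<in>{d \<in> {1..j}. d dvd j \<and> admissible m d}. d * ?c (n - j))"
    by (simp add: sum.Sigma case_prod_beta)
  also have "\<dots> = (\<Sum>j=1..n. sigma' m j * ?c (n - j))"
    by (intro sum.cong refl) (simp add: sigma'_alt sum_distrib_right)
  finally show ?thesis .
qed



definition th :: "real fps \<Rightarrow> real fps" where "th f = fps_X * fps_deriv f"

lemma th_nth: "th f $ n = of_nat n * f $ n"
  by (cases n) (simp_all add: th_def)

lemma th_mult: "th (f * g) = th f * g + f * th g"
  by (simp add: th_def algebra_simps)

definition Pf :: "nat \<Rightarrow> real fps" where "Pf m = Abs_fps (\<lambda>n. real (p' m (int n)))"
definition Sf :: "nat \<Rightarrow> real fps" where "Sf m = Abs_fps (\<lambda>n. real (sigma' m n))"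

lemma sigma'_0: assumes "0 < m" shows "sigma' m 0 = 0"
proof -
  have "infinite {d. d dvd (0::nat) \<and> 0 < d \<and> admissible m d}"
  proof (rule infinite_nat_iff_unbounded_le[THEN iffD2], intro allI)
    fix N
    have "1 * (N + 1) \<le> m * (N + 1)" using assms by (intro mult_le_mono1) simp
    then have "N \<le> m * (N + 1)" by simp
    then show "\<exists>d\<ge>N. d \<in> {d. d dvd (0::nat) \<and> 0 < d \<and> admissible m d}"
      using assms by (intro exI[of _ "m * (N + 1)"]) (auto simp: admissible_def)
  qed
  then show ?thesis by (simp add: sigma'_def)
qed

lemma Pf_rec: assumes "0 < m" shows "th (Pf m) = Sf m * Pf m"
proof (rule fps_ext)
  fix n
  have "th (Pf m) $ n = real (n * card (Pt m n))" by (simp add: th_nth Pf_def p'_nat)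
  also have "\<dots> = real (\<Sum>j=1..n. sigma' m j * card (Pt m (n - j)))" by (simp only: rec_nat)
  also have "\<dots> = (\<Sum>j=0..n. real (sigma' m j) * real (card (Pt m (n - j))))"
    using assms by (simp add: sum.atLeast_Suc_atMost sigma'_0)
  also have "\<dots> = (Sf m * Pf m) $ n"
    by (simp add: fps_mult_nth Sf_def Pf_def p'_nat)
  finally show "th (Pf m) $ n = (Sf m * Pf m) $ n" .
qed

definition Lf :: "nat \<Rightarrow> real fps" where "Lf d = Abs_fps (\<lambda>n. if 0 < n \<and> d dvd n then real d else 0)"

lemma Lf_eq: assumes "0 < d" shows "(1 - fps_X ^ d) * Lf d = fps_const (real d) * fps_X ^ d"
proof (rule fps_ext)
  fix n
  have "((1 - fps_X ^ d) * Lf d) $ n = Lf d $ n - (fps_X ^ d * Lf d) $ n"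
    by (simp add: algebra_simps)
  also have "\<dots> = (fps_const (real d) * fps_X ^ d) $ n"
  proof (cases "n < d")
    case True then show ?thesis by (auto simp: fps_X_power_mult_nth Lf_def dest: dvd_imp_le)
  next
    case False
    show ?thesis
    proof (cases "n = d")
      case True then show ?thesis using assms by (simp add: fps_X_power_mult_nth Lf_def)
    next
      case False2: False
      then have "d dvd n \<longleftrightarrow> d dvd (n - d)" using False by (simp add: dvd_minus_self)
      then show ?thesis using False False2 assms by (simp add: fps_X_power_mult_nth Lf_def)
    qed
  qed
  finally show "((1 - fps_X ^ d) * Lf d) $ n = (fps_const (real d) * fps_X ^ d) $ n" .
qed

lemma th_factor: "th (1 - fps_X ^ d) = - (fps_const (real d) * fps_X ^ d)"
  by (rule fps_ext) (simp add: th_nth)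

definition PiD :: "nat set \<Rightarrow> real fps" where "PiD D = (\<Prod>d\<in>D. (1 - fps_X ^ d))"

lemma th_Pi: assumes "finite D" "\<forall>d\<in>D. 0 < d"
  shows "th (PiD D) = - (\<Sum>d\<in>D. Lf d) * PiD D"
  using assms
proof (induction D rule: finite_induct)
  case empty then show ?case by (simp add: PiD_def th_def)
next
  case (insert d D)
  have Pins: "PiD (insert d D) = (1 - fps_X ^ d) * PiD D" using insert by (simp add: PiD_def)
  have "th (PiD (insert d D)) = th (1 - fps_X ^ d) * PiD D + (1 - fps_X ^ d) * th (PiD D)"
    by (simp add: Pins th_mult)
  also have "\<dots> = - ((1 - fps_X ^ d) * Lf d) * PiD D - (1 - fps_X ^ d) * ((\<Sum>d\<in>D. Lf d) * PiD D)"
    using insert by (simp add: th_factor Lf_eq)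
  also have "\<dots> = - (Lf d + (\<Sum>d\<in>D. Lf d)) * PiD (insert d D)"
    by (simp add: Pins algebra_simps)
  finally show ?case using insert by simp
qed

definition DB :: "nat \<Rightarrow> nat \<Rightarrow> nat set" where "DB m B = {d. 0 < d \<and> d \<le> B \<and> admissible m d}"

lemma finite_DB: "finite (DB m B)" by (rule finite_subset[of _ "{..B}"]) (auto simp: DB_def)

lemma Lsum_nth: assumes "0 < m" "n \<le> B" shows "(\<Sum>d\<in>DB m B. Lf d) $ n = real (sigma' m n)"
proof (cases "n = 0")
  case True then show ?thesis using assms by (simp add: fps_sum_nth Lf_def sigma'_0)
next
  case False
  have "(\<Sum>d\<in>DB m B. Lf d) $ n = (\<Sum>d\<in>DB m B. if d dvd n then real d else 0)"
    using False by (simp add: fps_sum_nth Lf_def)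
  also have "\<dots> = (\<Sum>d\<in>{d \<in> DB m B. d dvd n}. real d)"
    using finite_DB by (simp add: sum.inter_filter)
  also have "{d \<in> DB m B. d dvd n} = {d. d dvd n \<and> 0 < d \<and> admissible m d}"
    using False assms by (auto simp: DB_def dest: dvd_imp_le)
  finally show ?thesis by (simp add: sigma'_def)
qed

lemma Pt_0: "Pt m 0 = {{#}}"
  by (auto simp: Pt_def partitions_of_def) (metis gr_implies_not0 multiset_nonemptyE)

lemma PiD_0: "finite D \<Longrightarrow> \<forall>d\<in>D. 0 < d \<Longrightarrow> PiD D $ 0 = 1"
  by (induction D rule: finite_induct) (auto simp: PiD_def)

lemma PiP_trunc: assumes "0 < m" "n \<le> B" shows "(PiD (DB m B) * Pf m) $ n = (if n = 0 then 1 else 0)"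
proof -
  let ?R = "PiD (DB m B) * Pf m" and ?L = "\<Sum>d\<in>DB m B. Lf d"
  have pos: "\<forall>d\<in>DB m B. 0 < d" by (simp add: DB_def)
  have "th ?R = th (PiD (DB m B)) * Pf m + PiD (DB m B) * th (Pf m)" by (rule th_mult)
  also have "\<dots> = (Sf m - ?L) * ?R"
    using th_Pi[OF finite_DB pos] Pf_rec[OF assms(1)] by (simp add: algebra_simps)
  finally have thR: "th ?R = (Sf m - ?L) * ?R" .
  have "th ?R $ n = 0"
  proof -
    have "th ?R $ n = (\<Sum>i=0..n. (Sf m - ?L) $ i * ?R $ (n - i))" by (simp add: thR fps_mult_nth)
    also have "\<dots> = 0"
      by (intro sum.neutral ballI) (use assms in \<open>simp add: Lsum_nth Sf_def\<close>)
    finally show ?thesis .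
  qed
  then have n0: "n \<noteq> 0 \<Longrightarrow> ?R $ n = 0" by (simp add: th_nth)
  have "?R $ 0 = 1"
    using PiD_0[OF finite_DB pos] by (simp add: Pf_def p'_nat Pt_0)
  then show ?thesis using n0 by simp
qed



fun qb :: "'a::comm_ring_1 \<Rightarrow> nat \<Rightarrow> nat \<Rightarrow> 'a" where
  "qb q 0 r = (if r = 0 then 1 else 0)"
| "qb q (Suc n) 0 = 1"
| "qb q (Suc n) (Suc r) = qb q n r + q ^ Suc r * qb q n (Suc r)"

definition qp :: "'a::comm_ring_1 \<Rightarrow> nat \<Rightarrow> 'a" where
  "qp q n = (\<Prod>j\<in>{1..n}. 1 - q ^ j)"

lemma qp_0 [simp]: "qp q 0 = 1" by (simp add: qp_def)
lemma qp_Suc: "qp q (Suc n) = qp q n * (1 - q ^ Suc n)"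
  by (simp add: qp_def prod.cl_ivl_Suc)

lemma qb_0 [simp]: "qb q n 0 = 1" by (cases n) auto

lemma qb_gt: "n < r \<Longrightarrow> qb q n r = 0"
proof (induction n arbitrary: r)
  case 0 then show ?case by simp
next
  case (Suc n) then show ?case by (cases r) auto
qed

lemma qb_prod: "r \<le> n \<Longrightarrow> qb q n r * qp q r * qp q (n - r) = qp q n"
proof (induction n arbitrary: r)
  case 0 then show ?case by simp
next
  case (Suc n r)
  show ?case
  proof (cases r)
    case 0 then show ?thesis by simp
  next
    case (Suc r')
    then have r': "r' \<le> n" using Suc.prems by simp
    have "qb q n r' * qp q (Suc r') * qp q (n - r') = (1 - q ^ Suc r') * (qb q n r' * qp q r' * qp q (n - r'))"
      by (simp only: qp_Suc[of q r'] mult_ac)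
    then have t1: "qb q n r' * qp q (Suc r') * qp q (n - r') = (1 - q ^ Suc r') * qp q n"
      using Suc.IH[OF r'] by simp
    have t2: "qb q n (Suc r') * qp q (Suc r') * qp q (n - r') = (1 - q ^ (n - r')) * qp q n"
    proof (cases "r' = n")
      case True then show ?thesis by (simp add: qb_gt)
    next
      case False
      then have le: "Suc r' \<le> n" using r' by simp
      have nr: "n - r' = Suc (n - Suc r')" using le by simp
      have "qb q n (Suc r') * qp q (Suc r') * qp q (n - r') = (1 - q ^ (n - r')) * (qb q n (Suc r') * qp q (Suc r') * qp q (n - Suc r'))"
        by (simp only: nr qp_Suc[of q "n - Suc r'"] mult_ac)
      then show ?thesis using Suc.IH[OF le] by simp
    qed
    have e: "Suc n = Suc r' + (n - r')" using r' by simp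
    have qq: "q ^ Suc r' * q ^ (n - r') = q ^ Suc n"
      by (subst e) (simp only: power_add)
    have "qb q (Suc n) r * qp q r * qp q (Suc n - r)
        = qb q n r' * qp q (Suc r') * qp q (n - r') + q ^ Suc r' * (qb q n (Suc r') * qp q (Suc r') * qp q (n - r'))"
      by (simp add: Suc algebra_simps)
    also have "\<dots> = qp q n * (1 - q ^ Suc r' + q ^ Suc r' * (1 - q ^ (n - r')))"
      by (simp only: t1 t2) (simp add: algebra_simps)
    also have "\<dots> = qp q n * (1 - q ^ Suc r' * q ^ (n - r'))"
      by (simp add: algebra_simps)
    also have "\<dots> = qp q (Suc n)" by (simp only: qq qp_Suc)
    finally show ?thesis .
  qed
qed

lemma qb_formB:
  fixes q :: "'a::idom"
  assumes nz: "\<And>k. qp q k \<noteq> 0" and r: "r \<le> n"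
  shows "qb q (Suc n) (Suc r) = q ^ (n - r) * qb q n r + qb q n (Suc r)"
proof -
  let ?c = "qp q (Suc r) * qp q (n - r)"
  have c: "?c \<noteq> 0" using nz by simp
  have L: "qb q (Suc n) (Suc r) * ?c = qp q (Suc n)"
    using qb_prod[of "Suc r" "Suc n" q] r by (simp add: mult.assoc)
  have "qb q n r * ?c = (1 - q ^ Suc r) * (qb q n r * qp q r * qp q (n - r))"
    by (simp only: qp_Suc[of q r] mult_ac)
  then have t1: "qb q n r * ?c = (1 - q ^ Suc r) * qp q n"
    using qb_prod[OF r, of q] by simp
  have t2: "qb q n (Suc r) * ?c = (1 - q ^ (n - r)) * qp q n"
  proof (cases "r = n")
    case True then show ?thesis by (simp add: qb_gt)
  next
    case False
    then have le: "Suc r \<le> n" using r by simp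
    have nr: "n - r = Suc (n - Suc r)" using le by simp
    have "qb q n (Suc r) * ?c = (1 - q ^ (n - r)) * (qb q n (Suc r) * qp q (Suc r) * qp q (n - Suc r))"
      by (simp only: nr qp_Suc[of q "n - Suc r"] mult_ac)
    then show ?thesis using qb_prod[OF le, of q] by simp
  qed
  have e: "Suc n = (n - r) + Suc r" using r by simp
  have qq: "q ^ (n - r) * q ^ Suc r = q ^ Suc n"
    by (subst e) (simp only: power_add)
  have "(q ^ (n - r) * qb q n r + qb q n (Suc r)) * ?c
      = q ^ (n - r) * (qb q n r * ?c) + qb q n (Suc r) * ?c" by (simp add: algebra_simps)
  also have "\<dots> = qp q n * (1 - q ^ (n - r) * q ^ Suc r)"
    by (simp only: t1 t2) (simp add: algebra_simps)
  also have "\<dots> = qp q (Suc n)" by (simp only: qq qp_Suc)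
  finally have "(q ^ (n - r) * qb q n r + qb q n (Suc r)) * ?c = qb q (Suc n) (Suc r) * ?c"
    using L by simp
  then show ?thesis using c by simp
qed

definition T :: "int \<Rightarrow> int" where "T k = k * (k + 1) div 2"

lemma T_step: "T (k + 1) = T k + (k + 1)"
proof -
  have "(k + 1) * (k + 1 + 1) = k * (k + 1) + (k + 1) * 2" by (simp add: algebra_simps)
  then show ?thesis unfolding T_def by simp
qed

lemma T_nonneg: "0 \<le> T k"
proof -
  have "0 \<le> k * (k + 1)"
  proof (cases "0 \<le> k")
    case True then show ?thesis by simp
  next
    case False then have "k \<le> -1" by simp
    then have "k + 1 \<le> 0" "k \<le> 0" by simp_all
    then show ?thesis by (simp add: mult_nonpos_nonpos)
  qed
  then show ?thesis unfolding T_def by simp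
qed

definition E :: "nat \<Rightarrow> nat \<Rightarrow> nat" where "E n i = nat (T (int i - int ((n + 1) div 2)))"

lemma int_E: "int (E n i) = T (int i - int ((n + 1) div 2))"
  using T_nonneg by (simp add: E_def)

lemma E_even1: "even n \<Longrightarrow> E (Suc n) (Suc i) = E n i"
  by (auto simp: E_def elim!: evenE)

lemma E_even2: "even n \<Longrightarrow> E n i + n div 2 = i + E (Suc n) i"
proof -
  assume "even n"
  then obtain N where n: "n = 2 * N" by (auto elim!: evenE)
  have "T (int i - int N) = T ((int i - int N - 1) + 1)" by simp
  also have "\<dots> = T (int i - int N - 1) + (int i - int N)" using T_step[of "int i - int N - 1"] by simp
  moreover have "T (int i - (1 + int N)) = T (int i - int N - 1)" by (rule arg_cong[where f=T]) simp
  ultimately have "int (E n i + n div 2) = int (i + E (Suc n) i)"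
    using n by (simp add: int_E)
  then show ?thesis by (simp only: of_nat_eq_iff)
qed

lemma E_odd1: "odd n \<Longrightarrow> E (Suc n) i = E n i"
  by (auto simp: E_def elim!: oddE)

lemma E_odd2: "odd n \<Longrightarrow> i \<le> n \<Longrightarrow> (n - i) + E (Suc n) (Suc i) = E n i + Suc (n div 2)"
proof -
  assume "odd n" "i \<le> n"
  then obtain N where n: "n = 2 * N + 1" by (auto elim!: oddE)
  have "T (int i - int N) = T ((int i - int N - 1) + 1)" by simp
  also have "\<dots> = T (int i - int N - 1) + (int i - int N)" using T_step[of "int i - int N - 1"] by simp
  moreover have "T (int i - (1 + int N)) = T (int i - int N - 1)" by (rule arg_cong[where f=T]) simp
  ultimately have "int ((n - i) + E (Suc n) (Suc i)) = int (E n i + Suc (n div 2))"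
    using n \<open>i \<le> n\<close> by (simp add: int_E)
  then show ?thesis by (simp only: of_nat_eq_iff)
qed

definition fct :: "'a::comm_ring_1 \<Rightarrow> 'a \<Rightarrow> 'a \<Rightarrow> nat \<Rightarrow> 'a" where
  "fct z w q l = (if odd l then z + w * q ^ (l div 2) else w + z * q ^ (l div 2))"

definition K :: "'a::comm_ring_1 \<Rightarrow> 'a \<Rightarrow> 'a \<Rightarrow> nat \<Rightarrow> 'a" where
  "K z w q n = (\<Prod>l\<in>{1..n}. fct z w q l)"

lemma jtp_fin:
  fixes q z w :: "'a::idom"
  assumes nz: "\<And>k. qp q k \<noteq> 0"
  shows "K z w q n = (\<Sum>i=0..n. qb q n i * z ^ i * w ^ (n - i) * q ^ E n i)"
proof (induction n)
  case 0 then show ?case by (simp add: K_def E_def T_def)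
next
  case (Suc n)
  have KS: "K z w q (Suc n) = K z w q n * fct z w q (Suc n)"
    by (simp add: K_def prod.cl_ivl_Suc)
  have shift: "(\<Sum>i=0..Suc n. qb q (Suc n) i * z ^ i * w ^ (Suc n - i) * q ^ E (Suc n) i)
     = w ^ Suc n * q ^ E (Suc n) 0 + (\<Sum>i=0..n. qb q (Suc n) (Suc i) * z ^ Suc i * w ^ (n - i) * q ^ E (Suc n) (Suc i))"
    by (simp only: sum.atLeast0_atMost_Suc_shift) simp
  show ?case
  proof (cases "even n")
    case True
    let ?N = "n div 2"
    have f: "fct z w q (Suc n) = z + w * q ^ ?N" using True by (simp add: fct_def)
    have "K z w q (Suc n) = (\<Sum>i=0..n. qb q n i * z ^ i * w ^ (n - i) * q ^ E n i) * (z + w * q ^ ?N)"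
      by (simp add: KS f Suc.IH)
    also have "\<dots> = (\<Sum>i=0..n. qb q n i * z ^ i * w ^ (n - i) * q ^ E n i * z)
                   + (\<Sum>i=0..n. qb q n i * z ^ i * w ^ (n - i) * q ^ E n i * (w * q ^ ?N))"
      by (simp only: distrib_left sum_distrib_right)
    also have "\<dots> = (\<Sum>i=0..n. qb q n i * z ^ Suc i * w ^ (n - i) * q ^ E n i)
                   + (\<Sum>i=0..n. qb q n i * z ^ i * w ^ (Suc n - i) * q ^ (E n i + ?N))"
      by (intro arg_cong2[where f="(+)"] sum.cong refl) (simp_all add: Suc_diff_le power_add mult_ac)
    also have "(\<Sum>i=0..n. qb q n i * z ^ i * w ^ (Suc n - i) * q ^ (E n i + ?N))
             = (\<Sum>i=0..Suc n. qb q n i * z ^ i * w ^ (Suc n - i) * q ^ (E n i + ?N))"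
      by (simp add: qb_gt)
    also have "\<dots> = w ^ Suc n * q ^ E (Suc n) 0
        + (\<Sum>i=0..n. qb q n (Suc i) * z ^ Suc i * w ^ (n - i) * q ^ (Suc i + E (Suc n) (Suc i)))"
      by (simp only: sum.atLeast0_atMost_Suc_shift) (simp add: E_even2[OF True])
    finally have A: "K z w q (Suc n) = (\<Sum>i=0..n. qb q n i * z ^ Suc i * w ^ (n - i) * q ^ E n i) +
        (w ^ Suc n * q ^ E (Suc n) 0
        + (\<Sum>i=0..n. qb q n (Suc i) * z ^ Suc i * w ^ (n - i) * q ^ (Suc i + E (Suc n) (Suc i))))" .
    have B: "(\<Sum>i=0..n. qb q (Suc n) (Suc i) * z ^ Suc i * w ^ (n - i) * q ^ E (Suc n) (Suc i))
      = (\<Sum>i=0..n. qb q n i * z ^ Suc i * w ^ (n - i) * q ^ E n i)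
      + (\<Sum>i=0..n. qb q n (Suc i) * z ^ Suc i * w ^ (n - i) * q ^ (Suc i + E (Suc n) (Suc i)))"
      by (simp add: sum.distrib[symmetric] E_even1[OF True] algebra_simps power_add)
    show ?thesis using A B shift by (simp add: algebra_simps)
  next
    case False
    let ?N = "n div 2"
    have f: "fct z w q (Suc n) = w + z * q ^ Suc ?N" using False
      by (simp add: fct_def)
    have "K z w q (Suc n) = (\<Sum>i=0..n. qb q n i * z ^ i * w ^ (n - i) * q ^ E n i) * (w + z * q ^ Suc ?N)"
      by (simp add: KS f Suc.IH)
    also have "\<dots> = (\<Sum>i=0..n. qb q n i * z ^ i * w ^ (n - i) * q ^ E n i * w)
                   + (\<Sum>i=0..n. qb q n i * z ^ i * w ^ (n - i) * q ^ E n i * (z * q ^ Suc ?N))"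
      by (simp only: distrib_left sum_distrib_right)
    also have "\<dots> = (\<Sum>i=0..n. qb q n i * z ^ i * w ^ (Suc n - i) * q ^ E n i)
                   + (\<Sum>i=0..n. qb q n i * z ^ Suc i * w ^ (n - i) * q ^ (E n i + Suc ?N))"
      by (intro arg_cong2[where f="(+)"] sum.cong refl) (simp_all add: Suc_diff_le power_add mult_ac)
    also have "(\<Sum>i=0..n. qb q n i * z ^ i * w ^ (Suc n - i) * q ^ E n i)
             = (\<Sum>i=0..Suc n. qb q n i * z ^ i * w ^ (Suc n - i) * q ^ E n i)"
      by (simp add: qb_gt)
    also have "\<dots> = w ^ Suc n * q ^ E (Suc n) 0
        + (\<Sum>i=0..n. qb q n (Suc i) * z ^ Suc i * w ^ (n - i) * q ^ E (Suc n) (Suc i))"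
      by (simp only: sum.atLeast0_atMost_Suc_shift) (simp add: E_odd1[OF False])
    finally have A: "K z w q (Suc n) = (w ^ Suc n * q ^ E (Suc n) 0
        + (\<Sum>i=0..n. qb q n (Suc i) * z ^ Suc i * w ^ (n - i) * q ^ E (Suc n) (Suc i)))
        + (\<Sum>i=0..n. qb q n i * z ^ Suc i * w ^ (n - i) * q ^ (E n i + Suc ?N))" .
    have B: "(\<Sum>i=0..n. qb q (Suc n) (Suc i) * z ^ Suc i * w ^ (n - i) * q ^ E (Suc n) (Suc i))
      = (\<Sum>i=0..n. qb q n i * z ^ Suc i * w ^ (n - i) * q ^ (E n i + Suc ?N))
      + (\<Sum>i=0..n. qb q n (Suc i) * z ^ Suc i * w ^ (n - i) * q ^ E (Suc n) (Suc i))"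
    proof -
      have "(\<Sum>i=0..n. qb q (Suc n) (Suc i) * z ^ Suc i * w ^ (n - i) * q ^ E (Suc n) (Suc i))
        = (\<Sum>i=0..n. qb q n i * z ^ Suc i * w ^ (n - i) * (q ^ (n - i) * q ^ E (Suc n) (Suc i))
             + qb q n (Suc i) * z ^ Suc i * w ^ (n - i) * q ^ E (Suc n) (Suc i))"
        by (intro sum.cong refl) (simp add: qb_formB[OF nz] algebra_simps del: qb.simps(3))
      also have "\<dots> = (\<Sum>i=0..n. qb q n i * z ^ Suc i * w ^ (n - i) * q ^ (E n i + Suc ?N)
             + qb q n (Suc i) * z ^ Suc i * w ^ (n - i) * q ^ E (Suc n) (Suc i))"
        by (intro sum.cong refl) (simp only: power_add[symmetric] E_odd2[OF False] atLeastAtMost_iff)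
      finally show ?thesis by (simp add: sum.distrib)
    qed
    show ?thesis using A B shift by (simp add: algebra_simps)
  qed
qed



definition cm :: "nat \<Rightarrow> real fps \<Rightarrow> real fps \<Rightarrow> bool" where
  "cm B f g \<longleftrightarrow> (\<forall>n<B. f $ n = g $ n)"

lemma cm_refl[simp]: "cm B f f" by (simp add: cm_def)
lemma cm_sym: "cm B f g \<Longrightarrow> cm B g f" by (simp add: cm_def)
lemma cm_trans: "cm B f g \<Longrightarrow> cm B g h \<Longrightarrow> cm B f h" by (simp add: cm_def)
lemma cm_mono: "cm B f g \<Longrightarrow> B' \<le> B \<Longrightarrow> cm B' f g" by (simp add: cm_def)

lemma cm_mult: "cm B f g \<Longrightarrow> cm B f' g' \<Longrightarrow> cm B (f * f') (g * g')"
  unfolding cm_def fps_mult_nth by (auto intro!: sum.cong)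

lemma cm_add: "cm B f g \<Longrightarrow> cm B f' g' \<Longrightarrow> cm B (f + f') (g + g')"
  unfolding cm_def by simp

lemma cm_sum: "(\<And>i. i \<in> I \<Longrightarrow> cm B (f i) (g i)) \<Longrightarrow> cm B (sum f I) (sum g I)"
  unfolding cm_def fps_sum_nth by (auto intro!: sum.cong)

lemma cm_cancel: assumes "a $ 0 \<noteq> 0" "cm B (a * f) (a * g)" shows "cm B f g"
proof -
  have "cm B (inverse a * (a * f)) (inverse a * (a * g))" using cm_mult[OF cm_refl[of B "inverse a"] assms(2)] .
  also have "inverse a * (a * f) = f" using assms(1) by (simp add: mult.assoc[symmetric] inverse_mult_eq_1)
  also have "inverse a * (a * g) = g" using assms(1) by (simp add: mult.assoc[symmetric] inverse_mult_eq_1)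
  finally show ?thesis .
qed

lemma cm_Xpow: assumes "cm B f 1" shows "cm (B + c) (f * fps_X ^ c) (fps_X ^ c)"
  unfolding cm_def
proof (intro allI impI)
  fix n assume n: "n < B + c"
  show "(f * fps_X ^ c) $ n = fps_X ^ c $ n"
  proof (cases "n < c")
    case True then show ?thesis by (simp add: fps_X_power_mult_right_nth)
  next
    case False
    then have "n - c < B" using n by simp
    then have "f $ (n - c) = (1::real fps) $ (n - c)" using assms by (simp add: cm_def)
    then show ?thesis using False by (simp add: fps_X_power_mult_right_nth)
  qed
qed

lemma cm_shift: assumes "cm (B + N) (fps_X ^ N * f) (fps_X ^ N * g)" shows "cm B f g"
  unfolding cm_def
proof (intro allI impI)
  fix n assume "n < B"
  then have "(fps_X ^ N * f) $ (n + N) = (fps_X ^ N * g) $ (n + N)" using assms by (simp add: cm_def)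
  then show "f $ n = g $ n" by (simp add: fps_X_power_mult_nth)
qed

lemma cm_one_minus: "B \<le> d \<Longrightarrow> cm B (1 - fps_X ^ d) 1"
  by (simp add: cm_def)

abbreviation qX :: "nat \<Rightarrow> real fps" where "qX m \<equiv> fps_X ^ m"

lemma qp_nth0: "0 < m \<Longrightarrow> qp (qX m) k $ 0 = 1"
  by (induction k) (simp_all add: qp_Suc power_mult[symmetric])

lemma qp_nz: "0 < m \<Longrightarrow> qp (qX m) k \<noteq> 0"
  using qp_nth0[of m k] by auto

lemma qp_cm: assumes "0 < m" "r \<le> M" shows "cm (m * (r + 1)) (qp (qX m) M) (qp (qX m) r)"
  using assms(2)
proof (induction M rule: dec_induct)
  case base then show ?case by simp
next
  case (step M')
  have e: "qX m ^ Suc M' = fps_X ^ (m * Suc M')" by (rule power_mult[symmetric])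
  have "m * (r + 1) \<le> m * Suc M'" using step.hyps by simp
  then have "cm (m * (r + 1)) (1 - qX m ^ Suc M') 1" unfolding e by (rule cm_one_minus)
  then have "cm (m * (r + 1)) (qp (qX m) M' * (1 - qX m ^ Suc M')) (qp (qX m) r * 1)"
    using step.IH by (intro cm_mult)
  then show ?case by (simp add: qp_Suc)
qed

lemma qb_cm:
  assumes m: "0 < m" and r: "r \<le> n" and M: "min r (n - r) \<le> M"
  shows "cm (m * (min r (n - r) + 1)) (qb (qX m) n r * qp (qX m) M) 1"
proof -
  let ?q = "qX m"
  let ?s = "n - r"
  have prod: "qb ?q n r * qp ?q r * qp ?q ?s = qp ?q n" using qb_prod[OF r] .
  show ?thesis
  proof (cases "r \<le> ?s")
    case True
    have "cm (m * (?s + 1)) (qp ?q n) (qp ?q ?s)" using m by (intro qp_cm) auto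
    then have "cm (m * (?s + 1)) (qp ?q ?s * (qb ?q n r * qp ?q r)) (qp ?q ?s * 1)"
      using prod by (simp add: mult_ac)
    then have c1: "cm (m * (?s + 1)) (qb ?q n r * qp ?q r) 1"
      by (rule cm_cancel[rotated]) (simp add: qp_nth0 m)
    have c2: "cm (m * (r + 1)) (qb ?q n r * qp ?q M) (qb ?q n r * qp ?q r)"
      using M True m by (intro cm_mult qp_cm) auto
    have "cm (m * (r + 1)) (qb ?q n r * qp ?q M) 1"
      using c2 cm_mono[OF c1, of "m * (r + 1)"] True by (auto intro: cm_trans)
    then show ?thesis using True by (simp add: min_def)
  next
    case False
    have "cm (m * (r + 1)) (qp ?q n) (qp ?q r)" using m r by (intro qp_cm) auto
    then have "cm (m * (r + 1)) (qp ?q r * (qb ?q n r * qp ?q ?s)) (qp ?q r * 1)"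
      using prod by (simp add: mult_ac)
    then have c1: "cm (m * (r + 1)) (qb ?q n r * qp ?q ?s) 1"
      by (rule cm_cancel[rotated]) (simp add: qp_nth0 m)
    have c2: "cm (m * (?s + 1)) (qb ?q n r * qp ?q M) (qb ?q n r * qp ?q ?s)"
      using M False m by (intro cm_mult qp_cm) auto
    have "cm (m * (?s + 1)) (qb ?q n r * qp ?q M) 1"
      using c2 cm_mono[OF c1, of "m * (?s + 1)"] False by (auto intro: cm_trans)
    then show ?thesis using False by (simp add: min_def)
  qed
qed



definition G :: "nat \<Rightarrow> nat \<Rightarrow> real fps" where
  "G m N = (\<Prod>j\<in>{1..N}. (1 - fps_X ^ (m * j - 1)) * (1 - fps_X ^ (m * (j - 1) + 1)))"

lemma G_Suc: "G m (Suc N) = G m N * ((1 - fps_X ^ (m * Suc N - 1)) * (1 - fps_X ^ (m * N + 1)))"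
  by (simp add: G_def prod.cl_ivl_Suc)

lemma Kspec: assumes "0 < m"
  shows "K (-1) fps_X (qX m) (2 * N) = (-1) ^ N * fps_X ^ N * G m N"
proof (induction N)
  case 0 then show ?case by (simp add: K_def G_def)
next
  case (Suc N)
  have KK: "K (-1) fps_X (qX m) (2 * Suc N) = K (-1) fps_X (qX m) (2 * N) * fct (-1) fps_X (qX m) (Suc (2 * N))
      * fct (-1) fps_X (qX m) (Suc (Suc (2 * N)))"
    by (simp add: K_def prod.cl_ivl_Suc mult.assoc)
  have f1: "fct (-1) fps_X (qX m) (Suc (2 * N)) = - (1 - fps_X ^ (m * N + 1))"
    by (simp add: fct_def power_mult[symmetric] power_add)
  have e: "m * Suc N = Suc (m * Suc N - 1)" using assms by simp
  have "(qX m) ^ Suc N = fps_X ^ (m * Suc N)" by (rule power_mult[symmetric])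
  also have "\<dots> = fps_X * fps_X ^ (m * Suc N - 1)" by (subst e) simp
  finally have qq: "(qX m) ^ Suc N = fps_X * fps_X ^ (m * Suc N - 1)" .
  have f2: "fct (-1) fps_X (qX m) (Suc (Suc (2 * N))) = fps_X * (1 - fps_X ^ (m * Suc N - 1))"
  proof -
    have "fct (-1) fps_X (qX m) (Suc (Suc (2 * N))) = fps_X + (-1) * (qX m) ^ Suc N"
      by (simp add: fct_def)
    also have "\<dots> = fps_X * (1 - fps_X ^ (m * Suc N - 1))"
      by (simp only: qq) (simp add: algebra_simps)
    finally show ?thesis .
  qed
  show ?case unfolding KK f1 f2 Suc.IH G_Suc by (simp add: mult_ac) (simp add: algebra_simps)
qed

lemma adm_block:
  assumes m: "3 \<le> m" and t: "1 \<le> t" "t \<le> m"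
  shows "admissible m (m * N + t) \<longleftrightarrow> (t = 1 \<or> t = m - 1 \<or> t = m)"
proof -
  have "(m * N + t) mod m = t mod m" by simp
  also have "t mod m = (if t = m then 0 else t)" using t by auto
  finally have md: "(m * N + t) mod m = (if t = m then 0 else t)" .
  have m1: "(m - 1) mod m = m - 1" using m by simp
  show ?thesis unfolding admissible_def md m1 using m t by auto
qed

lemma DB_Suc: assumes m: "3 \<le> m"
  shows "DB m (m * Suc N) = insert (m * N + 1) (insert (m * N + (m - 1)) (insert (m * N + m) (DB m (m * N))))"
proof (rule set_eqI)
  fix d
  show "d \<in> DB m (m * Suc N) \<longleftrightarrow> d \<in> insert (m * N + 1) (insert (m * N + (m - 1)) (insert (m * N + m) (DB m (m * N))))"
  proof (cases "d \<le> m * N")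
    case True then show ?thesis using m by (auto simp: DB_def)
  next
    case False
    then obtain t where d: "d = m * N + t" and t1: "1 \<le> t" by (metis add_diff_inverse_nat less_one not_less_eq_eq Suc_le_eq le_add1 not_le le_eq_less_or_eq add_0_right)
    show ?thesis
    proof (cases "t \<le> m")
      case True
      then show ?thesis using adm_block[OF m t1 True, of N] m d t1 by (auto simp: DB_def)
    next
      case False
      then show ?thesis using d m by (auto simp: DB_def)
    qed
  qed
qed

lemma PiD_G: assumes m: "3 \<le> m" shows "PiD (DB m (m * N)) = qp (qX m) N * G m N"
proof (induction N)
  case 0
  have "DB m (m * 0) = {}" by (auto simp: DB_def)
  then show ?case by (simp add: PiD_def G_def)
next
  case (Suc N)
  let ?D = "DB m (m * N)"
  have fin: "finite ?D" by (rule finite_DB)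
  have nin: "m * N + 1 \<notin> ?D" "m * N + (m - 1) \<notin> ?D" "m * N + m \<notin> ?D"
    using m by (auto simp: DB_def)
  have dist: "m * N + 1 \<noteq> m * N + (m - 1)" "m * N + 1 \<noteq> m * N + m" "m * N + (m - 1) \<noteq> m * N + m"
    using m by auto
  have "PiD (DB m (m * Suc N)) = (1 - fps_X ^ (m * N + 1)) * ((1 - fps_X ^ (m * N + (m - 1))) *
      ((1 - fps_X ^ (m * N + m)) * PiD ?D))"
    unfolding DB_Suc[OF m] PiD_def using fin nin dist by simp
  also have "\<dots> = qp (qX m) (Suc N) * G m (Suc N)"
  proof -
    have a: "m * Suc N - 1 = m * N + (m - 1)" using m by simp
    have b1: "m * Suc N = m * N + m" by simp
    have b: "(qX m) ^ Suc N = fps_X ^ (m * N + m)" by (simp only: power_mult[symmetric] b1)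
    show ?thesis unfolding Suc.IH qp_Suc G_Suc a b by (simp only: mult_ac)
  qed
  finally show ?case .
qed



lemma T_ge: "k \<le> T k"
proof -
  have "0 \<le> k * (k - 1)"
  proof (cases "1 \<le> k")
    case True then show ?thesis by simp
  next
    case False then have "k \<le> 0" "k - 1 \<le> 0" by simp_all
    then show ?thesis by (simp add: mult_nonpos_nonpos)
  qed
  then have "2 * k \<le> k * (k + 1)" by (simp add: algebra_simps)
  then have "(2 * k) div 2 \<le> k * (k + 1) div 2" by (rule zdiv_mono1) simp
  then show ?thesis by (simp add: T_def)
qed

lemma E_ge: "i \<le> N + E (2 * N) i"
proof -
  have "int (E (2 * N) i) = T (int i - int N)" by (simp add: int_E)
  then have "int i - int N \<le> int (E (2 * N) i)" using T_ge by simp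
  then show ?thesis by simp
qed

definition cc :: "nat \<Rightarrow> nat \<Rightarrow> nat \<Rightarrow> nat" where "cc m N i = 2 * N - i + m * E (2 * N) i"

lemma cc_ge: assumes "1 \<le> m" "i \<le> 2 * N" shows "N \<le> cc m N i"
proof -
  have x: "E (2 * N) i \<le> m * E (2 * N) i" using assms mult_le_mono1[of 1 m "E (2 * N) i"] by simp
  show ?thesis unfolding cc_def using x E_ge[of i N] assms(2) by linarith
qed

lemma cc_bd: assumes "2 \<le> m" "i \<le> 2 * N" shows "2 * N \<le> m * (min i (2 * N - i) + 1) + cc m N i"
proof -
  let ?e = "E (2 * N) i"
  have a: "2 * ?e \<le> m * ?e" using assms mult_le_mono1[of 2 m ?e] by simp
  have b: "min i (2 * N - i) + 1 \<le> m * (min i (2 * N - i) + 1)"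
    using assms mult_le_mono1[of 1 m "min i (2 * N - i) + 1"] by simp
  have c: "i \<le> N + ?e" by (rule E_ge)
  show ?thesis
  proof (cases "i \<le> 2 * N - i")
    case True
    then have "min i (2 * N - i) = i" by simp
    then show ?thesis using a b c assms(2) unfolding cc_def by linarith
  next
    case False
    then have "min i (2 * N - i) = 2 * N - i" by simp
    then show ?thesis using a b c assms(2) unfolding cc_def by linarith
  qed
qed

definition AN :: "nat \<Rightarrow> nat \<Rightarrow> real fps" where
  "AN m N = (\<Sum>i=0..2*N. (-1) ^ (i + N) * fps_X ^ (cc m N i - N))"

lemma trunc: assumes m: "3 \<le> m" shows "cm N (PiD (DB m (m * N))) (AN m N)"
proof (rule cm_shift[where N = N])
  have m0: "0 < m" using m by simp
  have K: "K (-1) fps_X (qX m) (2 * N) = (\<Sum>i=0..2*N. qb (qX m) (2*N) i * (-1) ^ i * fps_X ^ (2*N - i) * (qX m) ^ E (2*N) i)"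
    by (rule jtp_fin) (rule qp_nz[OF m0])
  have "fps_X ^ N * PiD (DB m (m * N)) = (-1) ^ N * qp (qX m) N * K (-1) fps_X (qX m) (2 * N)"
  proof -
    have "((-1) ^ N * (-1) ^ N :: real fps) = 1" by (simp add: power_add[symmetric])
    then show ?thesis unfolding PiD_G[OF m] Kspec[OF m0]
      by (metis (no_types, lifting) mult.assoc mult.commute mult_1)
  qed
  also have "\<dots> = (\<Sum>i=0..2*N. (-1) ^ (i + N) * (qb (qX m) (2*N) i * qp (qX m) N * fps_X ^ cc m N i))"
    unfolding K sum_distrib_left
  proof (intro sum.cong refl)
    fix i
    have ex: "fps_X ^ (2*N - i) * (qX m) ^ E (2*N) i = (fps_X ^ cc m N i :: real fps)"
      by (simp only: cc_def power_mult[symmetric] power_add[symmetric])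
    show "(-1) ^ N * qp (qX m) N * (qb (qX m) (2*N) i * (-1) ^ i * fps_X ^ (2*N - i) * (qX m) ^ E (2*N) i)
        = (-1) ^ (i + N) * (qb (qX m) (2*N) i * qp (qX m) N * fps_X ^ cc m N i)"
      unfolding ex[symmetric] power_add[of "-1::real fps" i N] by (simp only: mult_ac)
  qed
  finally have L: "fps_X ^ N * PiD (DB m (m * N)) = \<dots>" .
  have R: "fps_X ^ N * AN m N = (\<Sum>i=0..2*N. (-1) ^ (i + N) * fps_X ^ cc m N i)"
    unfolding AN_def sum_distrib_left
  proof (intro sum.cong refl)
    fix i assume "i \<in> {0..2*N}"
    then have "N \<le> cc m N i" using m by (intro cc_ge) auto
    then have e: "cc m N i = N + (cc m N i - N)" by simp
    have eq: "(fps_X ^ cc m N i :: real fps) = fps_X ^ N * fps_X ^ (cc m N i - N)"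
      by (subst e) (simp only: power_add)
    show "(fps_X ^ N :: real fps) * ((-1) ^ (i + N) * fps_X ^ (cc m N i - N)) = (-1) ^ (i + N) * fps_X ^ cc m N i"
      unfolding eq by (simp only: mult_ac)
  qed
  show "cm (N + N) (fps_X ^ N * PiD (DB m (m * N))) (fps_X ^ N * AN m N)"
    unfolding L R
  proof (intro cm_sum cm_mult cm_refl)
    fix i assume i: "i \<in> {0..2*N}"
    let ?mn = "min i (2 * N - i)"
    have "cm (m * (?mn + 1)) (qb (qX m) (2*N) i * qp (qX m) N) 1"
      using i m0 by (intro qb_cm) auto
    then have "cm (m * (?mn + 1) + cc m N i) (qb (qX m) (2*N) i * qp (qX m) N * fps_X ^ cc m N i) (fps_X ^ cc m N i)"
      by (rule cm_Xpow)
    then show "cm (N + N) (qb (qX m) (2*N) i * qp (qX m) N * fps_X ^ cc m N i) (fps_X ^ cc m N i)"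
      by (rule cm_mono) (use cc_bd[of m i N] i m in auto)
  qed
qed



lemma Pf_0: "Pf m $ 0 = 1" by (simp add: Pf_def p'_nat Pt_0)

lemma Pi_stab: assumes "0 < m" "B \<le> B'" shows "cm (Suc B) (PiD (DB m B)) (PiD (DB m B'))"
proof (rule cm_cancel[where a = "Pf m"])
  show "Pf m $ 0 \<noteq> 0" by (simp add: Pf_0)
  show "cm (Suc B) (Pf m * PiD (DB m B)) (Pf m * PiD (DB m B'))"
    unfolding cm_def
  proof (intro allI impI)
    fix n assume "n < Suc B"
    then have "n \<le> B" "n \<le> B'" using assms by auto
    then show "(Pf m * PiD (DB m B)) $ n = (Pf m * PiD (DB m B')) $ n"
      using PiP_trunc[OF assms(1)] by (simp add: mult.commute)
  qed
qed

lemma AN_stab1: assumes m: "3 \<le> m" and j: "j < N" and N: "N \<le> N'"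
  shows "AN m N $ j = AN m N' $ j"
proof -
  have m0: "0 < m" using m by simp
  have "AN m N $ j = PiD (DB m (m * N)) $ j" using trunc[OF m, of N] j by (simp add: cm_def)
  also have "\<dots> = PiD (DB m (m * N')) $ j"
  proof -
    have "m * N \<le> m * N'" using N by simp
    moreover have "N \<le> m * N" using m0 by simp
    then have "j < Suc (m * N)" using j by linarith
    ultimately show ?thesis using Pi_stab[OF m0, of "m * N" "m * N'"] by (simp add: cm_def)
  qed
  also have "\<dots> = AN m N' $ j" using trunc[OF m, of N'] j N by (simp add: cm_def)
  finally show ?thesis .
qed

lemma AN_stab: assumes m: "3 \<le> m" and j: "j < N" "j < N'"
  shows "AN m N $ j = AN m N' $ j"
proof (cases "N \<le> N'")
  case True then show ?thesis using AN_stab1[OF m j(1) True] by simp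
next
  case False then show ?thesis using AN_stab1[OF m j(2), of N] by simp
qed

definition Af :: "nat \<Rightarrow> real fps" where "Af m = Abs_fps (\<lambda>j. AN m (Suc j) $ j)"

lemma AP: assumes m: "3 \<le> m" shows "Af m * Pf m = 1"
proof (rule fps_ext)
  fix n
  have m0: "0 < m" using m by simp
  have "(Af m * Pf m) $ n = (\<Sum>i=0..n. AN m (Suc i) $ i * Pf m $ (n - i))"
    by (simp add: fps_mult_nth Af_def)
  also have "\<dots> = (\<Sum>i=0..n. AN m (Suc n) $ i * Pf m $ (n - i))"
  proof (intro sum.cong refl)
    fix i assume "i \<in> {0..n}"
    then have "AN m (Suc i) $ i = AN m (Suc n) $ i" by (intro AN_stab[OF m]) auto
    then show "AN m (Suc i) $ i * Pf m $ (n - i) = AN m (Suc n) $ i * Pf m $ (n - i)" by simp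
  qed
  also have "\<dots> = (AN m (Suc n) * Pf m) $ n" by (simp add: fps_mult_nth)
  also have "\<dots> = (PiD (DB m (m * Suc n)) * Pf m) $ n"
  proof -
    have "cm (Suc n) (AN m (Suc n) * Pf m) (PiD (DB m (m * Suc n)) * Pf m)"
      by (intro cm_mult cm_refl cm_sym[OF trunc[OF m]])
    then show ?thesis by (simp add: cm_def)
  qed
  also have "\<dots> = (if n = 0 then 1 else 0)"
  proof -
    have "Suc n \<le> m * Suc n" using m0 mult_le_mono1[of 1 m "Suc n"] by simp
    then have "n \<le> m * Suc n" by linarith
    then show ?thesis by (rule PiP_trunc[OF m0])
  qed
  finally show "(Af m * Pf m) $ n = (1::real fps) $ n" by simp
qed

lemma th_one: "th 1 = 0" by (rule fps_ext) (simp add: th_nth)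

lemma final_fps: assumes m: "3 \<le> m" shows "th (Af m) * Pf m = - Sf m"
proof -
  have m0: "0 < m" using m by simp
  have "0 = th (Af m * Pf m)" by (simp add: AP[OF m] th_one)
  also have "\<dots> = th (Af m) * Pf m + Af m * (Sf m * Pf m)" by (simp add: th_mult Pf_rec[OF m0])
  also have "Af m * (Sf m * Pf m) = Sf m" using AP[OF m] by (simp add: mult_ac)
  finally show ?thesis by (simp add: eq_neg_iff_add_eq_0)
qed

lemma neg1_pow_nth: "((-1::real fps) ^ k * f) $ n = (-1) ^ k * f $ n"
  by (induction k) simp_all

definition ee :: "nat \<Rightarrow> nat \<Rightarrow> nat \<Rightarrow> nat" where "ee m N i = cc m N i - N"

lemma AN_nth: "AN m N $ j = (\<Sum>i=0..2*N. (-1) ^ (i + N) * (if j = ee m N i then 1 else 0))"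
  by (simp add: AN_def fps_sum_nth neg1_pow_nth ee_def)

lemma coeff_id: assumes m: "3 \<le> m"
  shows "(\<Sum>i=0..2*Suc n. (-1) ^ (i + Suc n) * real (ee m (Suc n) i) * real (p' m (int n - int (ee m (Suc n) i))))
       = - real (sigma' m n)"
proof -
  let ?N = "Suc n"
  have e0: "(th (Af m) * Pf m) $ n = - real (sigma' m n)" using final_fps[OF m] by (simp add: Sf_def)
  have e1: "(th (Af m) * Pf m) $ n = (\<Sum>j=0..n. real j * AN m ?N $ j * real (p' m (int (n - j))))"
    unfolding fps_mult_nth
  proof (intro sum.cong refl)
    fix j assume "j \<in> {0..n}"
    then have "AN m (Suc j) $ j = AN m ?N $ j" by (intro AN_stab[OF m]) auto
    then show "th (Af m) $ j * Pf m $ (n - j) = real j * AN m ?N $ j * real (p' m (int (n - j)))"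
      by (simp add: th_nth Af_def Pf_def)
  qed
  have e2: "(\<Sum>j=0..n. real j * AN m ?N $ j * real (p' m (int (n - j))))
     = (\<Sum>i=0..2*?N. (-1) ^ (i + ?N) * real (ee m ?N i) * real (p' m (int n - int (ee m ?N i))))"
  proof -
    have "(\<Sum>j=0..n. real j * AN m ?N $ j * real (p' m (int (n - j))))
        = (\<Sum>j=0..n. \<Sum>i=0..2*?N. (-1) ^ (i + ?N) * (if j = ee m ?N i then real j * real (p' m (int (n - j))) else 0))"
      unfolding AN_nth sum_distrib_left sum_distrib_right by (intro sum.cong refl) simp
    also have "\<dots> = (\<Sum>i=0..2*?N. (-1) ^ (i + ?N) * (\<Sum>j=0..n. if j = ee m ?N i then real j * real (p' m (int (n - j))) else 0))"
      unfolding sum_distrib_left by (subst sum.swap) (rule refl)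
    also have "\<dots> = (\<Sum>i=0..2*?N. (-1) ^ (i + ?N) * real (ee m ?N i) * real (p' m (int n - int (ee m ?N i))))"
    proof (intro sum.cong refl)
      fix i
      let ?e = "ee m ?N i"
      have "(\<Sum>j=0..n. if j = ?e then real j * real (p' m (int (n - j))) else 0)
          = (if ?e \<le> n then real ?e * real (p' m (int (n - ?e))) else 0)"
        by (simp add: sum.delta)
      also have "\<dots> = real ?e * real (p' m (int n - int ?e))"
      proof (cases "?e \<le> n")
        case True then show ?thesis by (simp add: of_nat_diff)
      next
        case False then have "int n - int ?e < 0" by simp
        then show ?thesis using False by (simp add: p'_def)
      qed
      finally show "(-1) ^ (i + ?N) * (\<Sum>j=0..n. if j = ?e then real j * real (p' m (int (n - j))) else 0)
          = (-1) ^ (i + ?N) * real ?e * real (p' m (int n - int ?e))" by simp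
    qed
    finally show ?thesis .
  qed
  show ?thesis using e0[unfolded e1 e2] .
qed



lemma T2: "2 * T k = k * (k + 1)"
proof -
  have "even (k * (k + 1))" by simp
  then show ?thesis unfolding T_def by simp
qed

lemma Qgon_T: "Qgon m k = int m * T (int k) - int k"
proof -
  have "int k * (int m * int k + (int m - 2)) = 2 * (int m * T (int k) - int k)"
    using T2[of "int k"] by (simp add: algebra_simps)
  then show ?thesis unfolding Qgon_def by simp
qed

lemma Pgon_T: "Pgon m k = int k + int m * T (- int k)"
proof -
  have t: "2 * T (- int k) = int k * int k - int k" using T2[of "- int k"] by (simp add: algebra_simps)
  have "int k * (int m * int k - (int m - 2)) = 2 * int k + int m * (int k * int k - int k)"
    by (simp add: algebra_simps)
  also have "\<dots> = 2 * int k + int m * (2 * T (- int k))" by (simp only: t)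
  also have "\<dots> = 2 * (int k + int m * T (- int k))" by (simp add: algebra_simps)
  finally show ?thesis unfolding Pgon_def by simp
qed

lemma Qgon_ge: "2 \<le> m \<Longrightarrow> int k \<le> Qgon m k"
proof -
  assume m: "2 \<le> m"
  have "int k \<le> T (int k)" by (rule T_ge)
  moreover have "0 \<le> T (int k)" by (rule T_nonneg)
  moreover have "2 * T (int k) \<le> int m * T (int k)"
    using m \<open>0 \<le> T (int k)\<close> by (intro mult_right_mono) simp_all
  ultimately have "2 * int k \<le> int m * T (int k)" by linarith
  then show ?thesis by (simp add: Qgon_T)
qed

lemma Pgon_ge: "int k \<le> Pgon m k"
  using T_nonneg[of "- int k"] by (simp add: Pgon_T)

lemma ee_Q: assumes m: "1 \<le> m" and k: "k \<le> N" shows "int (ee m N (N + k)) = Qgon m k"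
proof -
  have c: "N \<le> cc m N (N + k)" using m k by (intro cc_ge) auto
  have "int (E (2 * N) (N + k)) = T (int k)" by (simp add: int_E)
  then have "int (cc m N (N + k)) = int N - int k + int m * T (int k)"
    using k by (simp add: cc_def of_nat_diff)
  then show ?thesis using c by (simp add: ee_def of_nat_diff Qgon_T)
qed

lemma ee_P: assumes m: "1 \<le> m" and k: "k \<le> N" shows "int (ee m N (N - k)) = Pgon m k"
proof -
  have c: "N \<le> cc m N (N - k)" using m k by (intro cc_ge) auto
  have "int (E (2 * N) (N - k)) = T (- int k)" using k by (simp add: int_E of_nat_diff)
  then have "int (cc m N (N - k)) = int N + int k + int m * T (- int k)"
    using k by (simp add: cc_def of_nat_diff)
  then show ?thesis using c by (simp add: ee_def of_nat_diff Pgon_T)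
qed

lemma sum_split: "(\<Sum>i=0..2*N. h i) = (\<Sum>k=0..N. h (N + k)) + (\<Sum>k=1..N. h (N - k))"
  for h :: "nat \<Rightarrow> real"
proof -
  have U: "{0..2*N} = (\<lambda>k. N + k) ` {0..N} \<union> (\<lambda>k. N - k) ` {1..N}"
  proof (rule set_eqI, rule iffI)
    fix i assume "i \<in> {0..2*N}"
    show "i \<in> (\<lambda>k. N + k) ` {0..N} \<union> (\<lambda>k. N - k) ` {1..N}"
    proof (cases "N \<le> i")
      case True
      then have "i = N + (i - N)" "i - N \<in> {0..N}" using \<open>i \<in> {0..2*N}\<close> by auto
      then show ?thesis by blast
    next
      case False
      then have "i = N - (N - i)" "N - i \<in> {1..N}" by auto
      then show ?thesis by blast
    qed
  qed auto
  have D: "(\<lambda>k. N + k) ` {0..N} \<inter> (\<lambda>k. N - k) ` {1..N} = {}" by auto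
  have I1: "inj_on (\<lambda>k. N + k) {0..N}" by (auto simp: inj_on_def)
  have I2: "inj_on (\<lambda>k. N - k) {1..N}" by (auto simp: inj_on_def)
  have "sum h {0..2*N} = sum h ((\<lambda>k. N + k) ` {0..N}) + sum h ((\<lambda>k. N - k) ` {1..N})"
    unfolding U by (rule sum.union_disjoint) (simp_all only: D finite_imageI finite_atLeastAtMost)
  also have "\<dots> = (\<Sum>k=0..N. h (N + k)) + (\<Sum>k=1..N. h (N - k))"
    by (simp only: sum.reindex[OF I1] sum.reindex[OF I2] comp_def)
  finally show ?thesis .
qed

theorem theorem2p8:
  fixes m n :: nat
  assumes "m \<ge> 3" and "n \<ge> 1"
  shows "(\<lambda>k. (-1) ^ (k + 1) *
            (of_int (Pgon m k) * real (p' m (int n - Pgon m k))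
             + of_int (Qgon m k) * real (p' m (int n - Qgon m k))))
         sums real (sigma' m n)"
proof -
  have m: "3 \<le> m" using assms(1) .
  have m1: "1 \<le> m" and m2: "2 \<le> m" using m by auto
  let ?N = "Suc n"
  let ?f = "\<lambda>k. (-1) ^ (k + 1) *
            (of_int (Pgon m k) * real (p' m (int n - Pgon m k))
             + of_int (Qgon m k) * real (p' m (int n - Qgon m k))) :: real"
  let ?h = "\<lambda>i. (-1) ^ (i + ?N) * real (ee m ?N i) * real (p' m (int n - int (ee m ?N i)))"
  have H: "(\<Sum>i=0..2*?N. ?h i) = - real (sigma' m n)" by (rule coeff_id[OF m])
  have Q: "(\<Sum>k=0..?N. ?h (?N + k)) = (\<Sum>k=0..?N. (-1) ^ k * (of_int (Qgon m k) * real (p' m (int n - Qgon m k))))"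
  proof (intro sum.cong refl)
    fix k assume "k \<in> {0..?N}"
    then have k: "k \<le> ?N" by simp
    have s: "(-1::real) ^ (?N + k + ?N) = (-1) ^ k"
      by (simp add: power_add mult_2[symmetric] power_mult)
    have i: "int (ee m ?N (?N + k)) = Qgon m k" by (rule ee_Q[OF m1 k])
    have r: "real (ee m ?N (?N + k)) = of_int (Qgon m k)"
      by (simp only: i[symmetric] of_int_of_nat_eq)
    show "?h (?N + k) = (-1) ^ k * (of_int (Qgon m k) * real (p' m (int n - Qgon m k)))"
      unfolding r i s by (simp only: mult_ac)
  qed
  have P: "(\<Sum>k=1..?N. ?h (?N - k)) = (\<Sum>k=0..?N. (-1) ^ k * (of_int (Pgon m k) * real (p' m (int n - Pgon m k))))"
  proof -
    have "(\<Sum>k=0..?N. (-1) ^ k * (of_int (Pgon m k) * real (p' m (int n - Pgon m k))))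
        = (\<Sum>k=1..?N. (-1) ^ k * (of_int (Pgon m k) * real (p' m (int n - Pgon m k))))"
      by (simp add: sum.atLeast_Suc_atMost Pgon_def)
    also have "\<dots> = (\<Sum>k=1..?N. ?h (?N - k))"
    proof (intro sum.cong refl)
      fix k assume "k \<in> {1..?N}"
      then have k: "k \<le> ?N" by simp
      have e: "?N - k + ?N = 2 * (?N - k) + k" using k by simp
      have s: "(-1::real) ^ (?N - k + ?N) = (-1) ^ k"
        by (simp only: e power_add power_mult) simp
      have i: "int (ee m ?N (?N - k)) = Pgon m k" by (rule ee_P[OF m1 k])
      have r: "real (ee m ?N (?N - k)) = of_int (Pgon m k)"
        by (simp only: i[symmetric] of_int_of_nat_eq)
      show "(-1) ^ k * (of_int (Pgon m k) * real (p' m (int n - Pgon m k))) = ?h (?N - k)"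
        unfolding r i s by (simp only: mult_ac)
    qed
    finally show ?thesis by simp
  qed
  have S: "(\<Sum>k=0..?N. ?f k) = real (sigma' m n)"
  proof -
    have "(\<Sum>k=0..?N. ?f k) = - ((\<Sum>k=0..?N. (-1) ^ k * (of_int (Pgon m k) * real (p' m (int n - Pgon m k))))
        + (\<Sum>k=0..?N. (-1) ^ k * (of_int (Qgon m k) * real (p' m (int n - Qgon m k)))))"
      by (simp add: sum.distrib[symmetric] sum_negf[symmetric] algebra_simps)
    also have "\<dots> = - (\<Sum>i=0..2*?N. ?h i)" unfolding sum_split[of ?h ?N] P Q by simp
    also have "\<dots> = real (sigma' m n)" using H by simp
    finally show ?thesis .
  qed
  have Z: "?f k = 0" if "k \<notin> {0..?N}" for k
  proof -
    have "?N < k" using that by simp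
    then have a: "int n < Pgon m k" "int n < Qgon m k"
      using Pgon_ge[of k m] Qgon_ge[OF m2, of k] by linarith+
    then show ?thesis by (simp add: p'_def)
  qed
  have "?f sums (\<Sum>k\<in>{0..?N}. ?f k)"
  proof (rule sums_finite)
    show "finite {0..?N}" by simp
  next
    fix k assume "k \<notin> {0..?N}"
    then show "?f k = 0" by (rule Z)
  qed
  then show ?thesis using S by simp
qed

end
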